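(* Assume $p=m$, $D=0$, and $\mathrm{rank}\begin{bmatrix} I-A & B\\ C & 0\end{bmatrix}=n+m$. Let $(X,U)$ be a minimizer of Problem 3. Then the equation $\begin{bmatrix} K & H \\ G & F \end{bmatrix}\begin{bmatrix} X \\ Z \end{bmatrix} = \begin{bmatrix} U \\ V \end{bmatrix}$ has a unique solution $(K,H,G,F)$. Suppose moreover that (i) $\det(I-(A+BK))\neq 0$ and (ii) $\det(I-F)\neq 0$. Then $C(I-(A+BK))^{-1}B$ is invertible and, with $$M=\big(C(I-(A+BK))^{-1}B\big)^{-1},\qquad L=-G(I-(A+BK))^{-1}BM,$$ for every initial state $x_0\in\mathbb{R}^n$ and every constant reference value $r_+\in\mathbb{R}^m$, the closed-loop system $\psi_r(t+1)=\mathcal{A}_{cl}\psi_r(t)+\mathcal{M}_r r_+$, $y(t)=\mathcal{C}\psi_r(t)$ has a unique steady state $\psi_\infty=(x_\infty,z_\infty)$ (i.e. a unique solution of $\psi_\infty=\mathcal{A}_{cl}\psi_\infty+\mathcal{M}_r r_+$), and it satisfies $y_\infty=Cx_\infty=r_+$ and $z_\infty=0$.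
   Context: Plant: $x(t+1)=Ax(t)+Bu(t)$, $x(0)=x_0$, $y(t)=Cx(t)$, with $x\in\mathbb{R}^n$, $u,y\in\mathbb{R}^m$, $(A,B)$ reachable, horizon $N\ge 2$. $P\in\mathbb{R}^{N\times N}$ is the nilpotent shift matrix $P=\begin{bmatrix}0 & 0\\ I_{N-1} & 0\end{bmatrix}$; $\otimes$ is the Kronecker product; $\mathrm{e}_1\in\mathbb{R}^N$; $\|W\|_1=\sum_{i,j}|w_{ij}|$. Problem 3 (minimum attention control): minimize $\|U(P\otimes I_n)-U\|_1$ over $X\in\mathbb{R}^{n\times nN}$, $U\in\mathbb{R}^{m\times nN}$ subject to $AX+BU=X(P\otimes I_n)$ and $X(\mathrm{e}_1\otimes I_n)=I_n$. $Z=\begin{bmatrix}0_{n(N-1)\times n} & I_{n(N-1)}\end{bmatrix}$, $V=Z(P\otimes I_n)$. Tracking compensator: $z_r(t+1)=Fz_r(t)+Gx(t)+Lr(t)$, $u(t)=Hz_r(t)+Kx(t)+Mr(t)$, $z_r(0)=0$. Closed-loop augmented system with $\psi_r=(x,z_r)$: $\mathcal{A}_{cl}=\begin{bmatrix}A+BK & BH\\ G & F\end{bmatrix}$, $\mathcal{M}_r=\begin{bmatrix}BM\\ L\end{bmatrix}$, $\mathcal{C}=[C~~0]$. *)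

theory Defs
  imports "Jordan_Normal_Form.Matrix" "Jordan_Normal_Form.DL_Rank" "Jordan_Normal_Form.Determinant"
begin

definition shift_mat :: "nat \<Rightarrow> real mat" where
  "shift_mat N = mat N N (\<lambda>(i,j). if i = Suc j then 1 else 0)"

definition kron :: "real mat \<Rightarrow> real mat \<Rightarrow> real mat" where
  "kron P Q = mat (dim_row P * dim_row Q) (dim_col P * dim_col Q)
     (\<lambda>(i,j). P $$ (i div dim_row Q, j div dim_col Q) * Q $$ (i mod dim_row Q, j mod dim_col Q))"

definition e1_mat :: "nat \<Rightarrow> real mat" where
  "e1_mat N = mat N 1 (\<lambda>(i,j). if i = 0 then 1 else 0)"

definition norm1 :: "real mat \<Rightarrow> real" where
  "norm1 W = (\<Sum>i<dim_row W. \<Sum>j<dim_col W. \<bar>W $$ (i,j)\<bar>)"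

text \<open>Inverse of a square matrix (meaningful when it is invertible).\<close>
definition minv :: "real mat \<Rightarrow> real mat" where
  "minv Q = (THE R. R \<in> carrier_mat (dim_row Q) (dim_row Q) \<and>
                    Q * R = 1\<^sub>m (dim_row Q) \<and> R * Q = 1\<^sub>m (dim_row Q))"

text \<open>Reachability of (A,B): rank [B, AB, ..., A^(n-1) B] = n.\<close>
definition reach_mat :: "real mat \<Rightarrow> real mat \<Rightarrow> real mat" where
  "reach_mat A B = mat (dim_row A) (dim_row A * dim_col B)
     (\<lambda>(i,j). ((A ^\<^sub>m (j div dim_col B)) * B) $$ (i, j mod dim_col B))"

definition reachable :: "real mat \<Rightarrow> real mat \<Rightarrow> bool" where
  "reachable A B = (vec_space.rank (dim_row A) (reach_mat A B) = dim_row A)"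

definition feasible3 :: "real mat \<Rightarrow> real mat \<Rightarrow> nat \<Rightarrow> nat \<Rightarrow> nat \<Rightarrow> real mat \<Rightarrow> real mat \<Rightarrow> bool" where
  "feasible3 A B n m N X U \<longleftrightarrow>
     X \<in> carrier_mat n (n*N) \<and> U \<in> carrier_mat m (n*N) \<and>
     A * X + B * U = X * kron (shift_mat N) (1\<^sub>m n) \<and>
     X * kron (e1_mat N) (1\<^sub>m n) = 1\<^sub>m n"

definition cost3 :: "nat \<Rightarrow> nat \<Rightarrow> real mat \<Rightarrow> real" where
  "cost3 n N U = norm1 (U * kron (shift_mat N) (1\<^sub>m n) - U)"

definition minimizer3 :: "real mat \<Rightarrow> real mat \<Rightarrow> nat \<Rightarrow> nat \<Rightarrow> nat \<Rightarrow> real mat \<Rightarrow> real mat \<Rightarrow> bool" where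
  "minimizer3 A B n m N X U \<longleftrightarrow> feasible3 A B n m N X U \<and>
     (\<forall>X' U'. feasible3 A B n m N X' U' \<longrightarrow> cost3 n N U \<le> cost3 n N U')"

definition Zmat :: "nat \<Rightarrow> nat \<Rightarrow> real mat" where
  "Zmat n N = mat (n*(N-1)) (n*N) (\<lambda>(i,j). if j = i + n then 1 else 0)"

end

theory Submission
  imports Defs
begin

lemma kron_shift_carrier: "kron (shift_mat N) (1\<^sub>m n) \<in> carrier_mat (n*N) (n*N)"
  unfolding kron_def shift_mat_def by (auto simp: mult.commute)

lemma kron_shift_idx:
  assumes i: "i < n*N" and k: "k < n*N"
  shows "kron (shift_mat N) (1\<^sub>m n) $$ (i,k) = (if i = k + n then 1 else 0)"
proof -
  have n: "n > 0" using i by (cases n) auto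
  have id: "i div n < N" "k div n < N" using i k
    by (simp_all add: less_mult_imp_div_less mult.commute)
  have "kron (shift_mat N) (1\<^sub>m n) $$ (i,k) =
     (if i div n = Suc (k div n) then 1 else 0) * (if i mod n = k mod n then 1 else 0)"
    unfolding kron_def shift_mat_def using i k id n by (auto simp: mult.commute)
  also have "\<dots> = (if i = k + n then 1 else 0)"
  proof -
    have "(i div n = Suc (k div n) \<and> i mod n = k mod n) \<longleftrightarrow> i = k + n"
    proof
      assume "i div n = Suc (k div n) \<and> i mod n = k mod n"
      then have "n * (i div n) + i mod n = n * (k div n) + k mod n + n" by simp
      then show "i = k + n" by simp
    next
      assume "i = k + n" then show "i div n = Suc (k div n) \<and> i mod n = k mod n" using n by simp
    qed
    then show ?thesis by auto
  qed
  finally show ?thesis .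
qed

lemma kron_e1_idx:
  assumes k: "k < n*N" and j: "j < n"
  shows "kron (e1_mat N) (1\<^sub>m n) $$ (k,j) = (if k = j then 1 else 0)"
proof -
  have n: "n > 0" using j by auto
  have id: "k div n < N" using k by (simp add: less_mult_imp_div_less mult.commute)
  have "kron (e1_mat N) (1\<^sub>m n) $$ (k,j) =
     (if k div n = 0 then 1 else 0) * (if k mod n = j then 1 else 0)"
    unfolding kron_def e1_mat_def using k j id n by (auto simp: mult.commute)
  also have "\<dots> = (if k = j then 1 else 0)"
    using j by (auto simp: div_eq_0_iff)
  finally show ?thesis .
qed

lemma kron_e1_carrier: "kron (e1_mat N) (1\<^sub>m n) \<in> carrier_mat (n*N) n"
  unfolding kron_def e1_mat_def by (auto simp: mult.commute)

lemma X_first: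
  assumes f: "feasible3 A B n m N X U" and N: "N \<ge> 1" and i: "i < n" and j: "j < n"
  shows "X $$ (i,j) = (if i = j then 1 else 0)"
proof -
  have X: "X \<in> carrier_mat n (n*N)" and e: "X * kron (e1_mat N) (1\<^sub>m n) = 1\<^sub>m n"
    using f unfolding feasible3_def by auto
  have jN: "j < n*N" using j N by (metis less_le_trans mult.right_neutral mult_le_mono2)
  have "1\<^sub>m n $$ (i,j) = (X * kron (e1_mat N) (1\<^sub>m n)) $$ (i,j)" using e by simp
  also have "\<dots> = (\<Sum>k<n*N. X $$ (i,k) * (if k = j then 1 else 0))"
    using X kron_e1_carrier[of N n] i j
    by (auto simp: scalar_prod_def kron_e1_idx atLeast0LessThan intro!: sum.cong)
  also have "\<dots> = X $$ (i,j)" using jN by (simp add: if_distrib cong: if_cong)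
  finally show ?thesis using i j by simp
qed

definition Xr :: "nat \<Rightarrow> nat \<Rightarrow> real mat \<Rightarrow> real mat" where
  "Xr n N X = mat n (n*(N-1)) (\<lambda>(i,j). X $$ (i, j+n))"

lemma nN: "(N::nat) \<ge> 1 \<Longrightarrow> (n::nat)*N = n + n*(N-1)"
  by (cases N) (auto simp: algebra_simps)

lemma T_block:
  assumes f: "feasible3 A B n m N X U" and N: "N \<ge> 1"
  shows "X @\<^sub>r Zmat n N = four_block_mat (1\<^sub>m n) (Xr n N X) (0\<^sub>m (n*(N-1)) n) (1\<^sub>m (n*(N-1)))"
proof -
  have X: "X \<in> carrier_mat n (n*N)" using f unfolding feasible3_def by auto
  note e = nN[OF N]
  show ?thesis
  proof (rule eq_matI)
    fix i j assume i: "i < dim_row (four_block_mat (1\<^sub>m n) (Xr n N X) (0\<^sub>m (n*(N-1)) n) (1\<^sub>m (n*(N-1))))"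
      and j: "j < dim_col (four_block_mat (1\<^sub>m n) (Xr n N X) (0\<^sub>m (n*(N-1)) n) (1\<^sub>m (n*(N-1))))"
    then have i': "i < n + n*(N-1)" and j': "j < n + n*(N-1)" by auto
    show "(X @\<^sub>r Zmat n N) $$ (i, j) = four_block_mat (1\<^sub>m n) (Xr n N X) (0\<^sub>m (n*(N-1)) n) (1\<^sub>m (n*(N-1))) $$ (i, j)"
    proof (cases "i < n")
      case True
      then show ?thesis using i' j' X e X_first[OF f N True, of j]
        by (auto simp: append_rows_def Xr_def)
    next
      case False
      then show ?thesis using i' j' X e
        by (auto simp: append_rows_def Xr_def Zmat_def)
    qed
  qed (insert X nN[OF N], auto simp: append_rows_def Zmat_def)
qed

lemma shift_fix:
  assumes e: "e \<in> carrier_vec (n*N)" and fx: "kron (shift_mat N) (1\<^sub>m n) *\<^sub>v e = e"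
  shows "e = 0\<^sub>v (n*N)"
proof -
  have S: "kron (shift_mat N) (1\<^sub>m n) \<in> carrier_mat (n*N) (n*N)" by (rule kron_shift_carrier)
  have val: "e $ i = (if i \<ge> n then e $ (i - n) else 0)" if i: "i < n*N" for i
  proof -
    have "e $ i = (kron (shift_mat N) (1\<^sub>m n) *\<^sub>v e) $ i" using fx by simp
    also have "\<dots> = (\<Sum>k<n*N. (if i = k + n then 1 else 0) * e $ k)"
      using S e i by (auto simp: scalar_prod_def kron_shift_idx atLeast0LessThan intro!: sum.cong)
    also have "\<dots> = (\<Sum>k<n*N. if k = i - n \<and> i \<ge> n then e $ k else 0)"
      by (rule sum.cong, auto)
    also have "\<dots> = (if i \<ge> n then e $ (i - n) else 0)"
      using i by (cases "i \<ge> n") (auto simp: sum.delta)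
    finally show ?thesis .
  qed
  have "\<forall>i. i < n*N \<longrightarrow> e $ i = 0"
  proof
    fix i show "i < n*N \<longrightarrow> e $ i = 0"
    proof (induction i rule: less_induct)
      case (less i)
      show ?case
      proof
        assume i: "i < n*N"
        show "e $ i = 0"
        proof (cases "i \<ge> n")
          case True
          then have "i - n < i" using i by (cases n) auto
          then show ?thesis using less val[OF i] i True by auto
        next
          case False then show ?thesis using val[OF i] by auto
        qed
      qed
    qed
  qed
  then show ?thesis using e by (intro eq_vecI) auto
qed

lemma blk_inv:
  assumes Y: "(Y::real mat) \<in> carrier_mat a b"
  shows "four_block_mat (1\<^sub>m a) Y (0\<^sub>m b a) (1\<^sub>m b) * four_block_mat (1\<^sub>m a) (-Y) (0\<^sub>m b a) (1\<^sub>m b) = 1\<^sub>m (a+b)"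
    "four_block_mat (1\<^sub>m a) (-Y) (0\<^sub>m b a) (1\<^sub>m b) * four_block_mat (1\<^sub>m a) Y (0\<^sub>m b a) (1\<^sub>m b) = 1\<^sub>m (a+b)"
proof -
  have mY: "-Y \<in> carrier_mat a b" using Y by auto
  show "four_block_mat (1\<^sub>m a) Y (0\<^sub>m b a) (1\<^sub>m b) * four_block_mat (1\<^sub>m a) (-Y) (0\<^sub>m b a) (1\<^sub>m b) = 1\<^sub>m (a+b)"
    apply (subst mult_four_block_mat[OF one_carrier_mat Y zero_carrier_mat one_carrier_mat one_carrier_mat mY zero_carrier_mat one_carrier_mat])
    apply (subst four_block_one_mat[symmetric])
    apply (rule cong_four_block_mat)
    using Y by auto
  show "four_block_mat (1\<^sub>m a) (-Y) (0\<^sub>m b a) (1\<^sub>m b) * four_block_mat (1\<^sub>m a) Y (0\<^sub>m b a) (1\<^sub>m b) = 1\<^sub>m (a+b)"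
    apply (subst mult_four_block_mat[OF one_carrier_mat mY zero_carrier_mat one_carrier_mat one_carrier_mat Y zero_carrier_mat one_carrier_mat])
    apply (subst four_block_one_mat[symmetric])
    apply (rule cong_four_block_mat)
    using Y by auto
qed

lemma four_block_inj:
  assumes "A \<in> carrier_mat r1 c1" "B \<in> carrier_mat r1 c2" "C \<in> carrier_mat r2 c1" "D \<in> carrier_mat r2 c2"
    "A' \<in> carrier_mat r1 c1" "B' \<in> carrier_mat r1 c2" "C' \<in> carrier_mat r2 c1" "D' \<in> carrier_mat r2 c2"
    and eq: "four_block_mat A B C D = four_block_mat A' B' C' D'"
  shows "A = A' \<and> B = B' \<and> C = C' \<and> D = D'"
proof (intro conjI)
  let ?M = "four_block_mat A B C D" let ?M' = "four_block_mat A' B' C' D'"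
  show "A = A'"
  proof (rule eq_matI)
    fix i j assume "i < dim_row A'" "j < dim_col A'"
    moreover have "?M $$ (i,j) = ?M' $$ (i,j)" using eq by simp
    ultimately show "A $$ (i,j) = A' $$ (i,j)" using assms(1-8) by auto
  qed (insert assms, auto)
  show "B = B'"
  proof (rule eq_matI)
    fix i j assume "i < dim_row B'" "j < dim_col B'"
    moreover have "?M $$ (i,j+c1) = ?M' $$ (i,j+c1)" using eq by simp
    ultimately show "B $$ (i,j) = B' $$ (i,j)" using assms(1-8) by auto
  qed (insert assms, auto)
  show "C = C'"
  proof (rule eq_matI)
    fix i j assume "i < dim_row C'" "j < dim_col C'"
    moreover have "?M $$ (i+r1,j) = ?M' $$ (i+r1,j)" using eq by simp
    ultimately show "C $$ (i,j) = C' $$ (i,j)" using assms(1-8) by auto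
  qed (insert assms, auto)
  show "D = D'"
  proof (rule eq_matI)
    fix i j assume "i < dim_row D'" "j < dim_col D'"
    moreover have "?M $$ (i+r1,j+c1) = ?M' $$ (i+r1,j+c1)" using eq by simp
    ultimately show "D $$ (i,j) = D' $$ (i,j)" using assms(1-8) by auto
  qed (insert assms, auto)
qed

lemma inv_exists:
  assumes Q: "(Q::real mat) \<in> carrier_mat n n" and d: "det Q \<noteq> 0"
  shows "\<exists>R. R \<in> carrier_mat n n \<and> Q * R = 1\<^sub>m n \<and> R * Q = 1\<^sub>m n"
proof -
  have "Q \<in> Units (ring_mat TYPE(real) n ())" by (rule det_non_zero_imp_unit[OF Q d])
  then show ?thesis unfolding Units_def ring_mat_def by auto
qed

lemma minv_props:
  assumes Q: "(Q::real mat) \<in> carrier_mat n n" and d: "det Q \<noteq> 0"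
  shows "minv Q \<in> carrier_mat n n \<and> Q * minv Q = 1\<^sub>m n \<and> minv Q * Q = 1\<^sub>m n"
proof -
  obtain R where R: "R \<in> carrier_mat n n" "Q * R = 1\<^sub>m n" "R * Q = 1\<^sub>m n"
    using inv_exists[OF Q d] by blast
  have dr: "dim_row Q = n" using Q by auto
  have "minv Q = R" unfolding minv_def dr
  proof (rule the_equality)
    show "R \<in> carrier_mat n n \<and> Q * R = 1\<^sub>m n \<and> R * Q = 1\<^sub>m n" using R by auto
  next
    fix R' assume R': "R' \<in> carrier_mat n n \<and> Q * R' = 1\<^sub>m n \<and> R' * Q = 1\<^sub>m n"
    have "R' = R' * (Q * R)" using R R' by auto
    also have "\<dots> = (R' * Q) * R" using R R' Q by (metis assoc_mult_mat)
    also have "\<dots> = R" using R R' by auto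
    finally show "R' = R" .
  qed
  then show ?thesis using R by simp
qed

lemma inv_invertible:
  assumes "(Q::real mat) \<in> carrier_mat n n" "R \<in> carrier_mat n n" "Q * R = 1\<^sub>m n" "R * Q = 1\<^sub>m n"
  shows "invertible_mat Q"
  using assms unfolding invertible_mat_def inverts_mat_def square_mat.simps by auto

lemma append_rows_mult:
  assumes X: "X \<in> carrier_mat a c" and Z: "Z \<in> carrier_mat b c" and S: "S \<in> carrier_mat c d"
  shows "(X @\<^sub>r Z) * S = (X * S) @\<^sub>r (Z * S)"
proof (rule eq_matI)
  fix i j assume i: "i < dim_row ((X * S) @\<^sub>r (Z * S))" and j: "j < dim_col ((X * S) @\<^sub>r (Z * S))"
  then have i': "i < a + b" and j': "j < d" using X Z S by (auto simp: append_rows_def)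
  show "((X @\<^sub>r Z) * S) $$ (i, j) = ((X * S) @\<^sub>r (Z * S)) $$ (i, j)"
    using i' j' X Z S by (cases "i < a") (auto simp: append_rows_def scalar_prod_def intro!: sum.cong)
qed (insert X Z S, auto simp: append_rows_def)

lemma mult_zero_vec_r: "(A::real mat) \<in> carrier_mat a b \<Longrightarrow> A *\<^sub>v 0\<^sub>v b = 0\<^sub>v a"
  by (intro eq_vecI) (auto simp: row_def)

lemma vec_eqI_n: "(v::real vec) \<in> carrier_vec n \<Longrightarrow> w \<in> carrier_vec n \<Longrightarrow> (\<And>i. i < n \<Longrightarrow> v $ i = w $ i) \<Longrightarrow> v = w"
  by (intro eq_vecI) auto

lemma vec_eqD_n: "(v::real vec) = w \<Longrightarrow> i < n \<Longrightarrow> v $ i = w $ i"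
  by auto

lemma mult_uminus_vec_r: "(B::real mat) \<in> carrier_mat a b \<Longrightarrow> y \<in> carrier_vec b \<Longrightarrow> B *\<^sub>v (- y) = - (B *\<^sub>v y)"
  by (intro eq_vecI) auto

lemma zero_mat_mult_vec: "v \<in> carrier_vec b \<Longrightarrow> (0\<^sub>m a b :: real mat) *\<^sub>v v = 0\<^sub>v a"
  by (intro eq_vecI) auto

lemma vhelp1:
  fixes x a b c :: "real vec"
  assumes c: "x \<in> carrier_vec n" "a \<in> carrier_vec n" "b \<in> carrier_vec n" "c \<in> carrier_vec n"
    and e: "x - (a + b) = c"
  shows "(x - a) + (- b - c) = 0\<^sub>v n"
proof (rule eq_vecI)
  fix i assume i: "i < dim_vec (0\<^sub>v n)"
  then have "(x - (a + b)) $ i = c $ i" using e by simp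
  then show "((x - a) + (- b - c)) $ i = 0\<^sub>v n $ i" using c i by simp
qed (insert c, auto)

lemma vhelp2:
  fixes y w :: "real vec"
  assumes c: "w \<in> carrier_vec m" and y: "y = 0\<^sub>v m" and e: "y - w = 0\<^sub>v m"
  shows "w = 0\<^sub>v m"
proof (rule eq_vecI)
  fix i assume i: "i < dim_vec (0\<^sub>v m)"
  then have "(y - w) $ i = 0\<^sub>v m $ i" using e by simp
  then show "w $ i = 0\<^sub>v m $ i" using c i y by simp
qed (insert c, auto)

lemma vhelp3:
  fixes x a b y :: "real vec"
  assumes c: "x \<in> carrier_vec n" "a \<in> carrier_vec n" "b \<in> carrier_vec n" "y \<in> carrier_vec n"
    and e: "x - (a + b) = y"
  shows "(a + b + 0\<^sub>v n) + y = x"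
proof (rule eq_vecI)
  fix i assume i: "i < dim_vec x"
  then have "(x - (a + b)) $ i = y $ i" using e c by simp
  then show "((a + b + 0\<^sub>v n) + y) $ i = x $ i" using c i by simp
qed (insert c, auto)

lemma vhelp4:
  fixes g :: "real vec"
  assumes c: "g \<in> carrier_vec n"
  shows "(g + 0\<^sub>v n) + - g = 0\<^sub>v n"
  by (rule eq_vecI, insert c, auto)

lemma vhelp5:
  fixes a b p q c :: "real vec"
  assumes "a \<in> carrier_vec n" "b \<in> carrier_vec n" "p \<in> carrier_vec n" "q \<in> carrier_vec n" "c \<in> carrier_vec n"
    and "p = a + c" "q = b + c"
  shows "a - b = p - q"
  by (rule eq_vecI, insert assms, auto)

lemma vhelp6:
  fixes p q :: "real vec"
  assumes "p \<in> carrier_vec n" "q \<in> carrier_vec n" "p - q = 0\<^sub>v n"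
  shows "p = q"
proof (rule eq_vecI)
  fix i assume i: "i < dim_vec q"
  then have "(p - q) $ i = 0\<^sub>v n $ i" using assms by simp
  then show "p $ i = q $ i" using assms(1,2) i by simp
qed (insert assms, auto)

theorem lemma1:
  fixes A B C X U :: "real mat" and n m N :: nat
  assumes A: "A \<in> carrier_mat n n" and B: "B \<in> carrier_mat n m" and C: "C \<in> carrier_mat m n"
    and reach: "reachable A B"
    and N: "N \<ge> 2"
    and rank: "vec_space.rank (n+m) (four_block_mat (1\<^sub>m n - A) B C (0\<^sub>m m m)) = n + m"
    and opt: "minimizer3 A B n m N X U"
  shows "(\<exists>!(K,H,G,F). K \<in> carrier_mat m n \<and> H \<in> carrier_mat m (n*(N-1)) \<and>
            G \<in> carrier_mat (n*(N-1)) n \<and> F \<in> carrier_mat (n*(N-1)) (n*(N-1)) \<and>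
            four_block_mat K H G F * (X @\<^sub>r Zmat n N) =
              U @\<^sub>r (Zmat n N * kron (shift_mat N) (1\<^sub>m n)))
       \<and> (\<forall>K H G F. K \<in> carrier_mat m n \<longrightarrow> H \<in> carrier_mat m (n*(N-1)) \<longrightarrow>
            G \<in> carrier_mat (n*(N-1)) n \<longrightarrow> F \<in> carrier_mat (n*(N-1)) (n*(N-1)) \<longrightarrow>
            four_block_mat K H G F * (X @\<^sub>r Zmat n N) =
              U @\<^sub>r (Zmat n N * kron (shift_mat N) (1\<^sub>m n)) \<longrightarrow>
            det (1\<^sub>m n - (A + B * K)) \<noteq> 0 \<longrightarrow>
            det (1\<^sub>m (n*(N-1)) - F) \<noteq> 0 \<longrightarrow>
            invertible_mat (C * minv (1\<^sub>m n - (A + B * K)) * B) \<and>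
            (let M = minv (C * minv (1\<^sub>m n - (A + B * K)) * B);
                 L = - (G * minv (1\<^sub>m n - (A + B * K)) * B * M);
                 Acl = four_block_mat (A + B * K) (B * H) G F;
                 Mr = (B * M) @\<^sub>r L
             in \<forall>r \<in> carrier_vec m.
                  (\<exists>!\<psi>. \<psi> \<in> carrier_vec (n + n*(N-1)) \<and> \<psi> = Acl *\<^sub>v \<psi> + Mr *\<^sub>v r) \<and>
                  (\<forall>\<psi>. \<psi> \<in> carrier_vec (n + n*(N-1)) \<longrightarrow> \<psi> = Acl *\<^sub>v \<psi> + Mr *\<^sub>v r \<longrightarrow>
                        C *\<^sub>v vec_first \<psi> n = r \<and> vec_last \<psi> (n*(N-1)) = 0\<^sub>v (n*(N-1)))))"
proof -
  define n' where "n' = n*(N-1)"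
  have N1: "N \<ge> 1" using N by auto
  have nN': "n*N = n + n'" unfolding n'_def using nN[OF N1] .
  have f: "feasible3 A B n m N X U" using opt unfolding minimizer3_def by auto
  have X: "X \<in> carrier_mat n (n+n')" and Uc: "U \<in> carrier_mat m (n+n')"
    and dyn: "A * X + B * U = X * kron (shift_mat N) (1\<^sub>m n)"
    using f nN' unfolding feasible3_def by auto
  define S where "S = kron (shift_mat N) (1\<^sub>m n)"
  have Sc: "S \<in> carrier_mat (n+n') (n+n')" unfolding S_def using kron_shift_carrier[of N n] nN' by simp
  define Z where "Z = Zmat n N"
  have Zc: "Z \<in> carrier_mat n' (n+n')" unfolding Z_def Zmat_def n'_def using nN' n'_def by auto
  define Y where "Y = U @\<^sub>r (Z * S)"
  have Yc: "Y \<in> carrier_mat (m+n') (n+n')" unfolding Y_def using Uc Zc Sc by auto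
  define T where "T = X @\<^sub>r Z"
  define Xr' where "Xr' = Xr n N X"
  have Xrc: "Xr' \<in> carrier_mat n n'" unfolding Xr'_def Xr_def n'_def by auto
  have Tb: "T = four_block_mat (1\<^sub>m n) Xr' (0\<^sub>m n' n) (1\<^sub>m n')"
    unfolding T_def Z_def Xr'_def n'_def by (rule T_block[OF f N1])
  define Ti where "Ti = four_block_mat (1\<^sub>m n) (-Xr') (0\<^sub>m n' n) (1\<^sub>m n')"
  have Tc: "T \<in> carrier_mat (n+n') (n+n')" unfolding Tb by auto
  have Tic: "Ti \<in> carrier_mat (n+n') (n+n')" unfolding Ti_def by auto
  have TTi: "T * Ti = 1\<^sub>m (n+n')" unfolding Tb Ti_def by (rule blk_inv(1)[OF Xrc])
  have TiT: "Ti * T = 1\<^sub>m (n+n')" unfolding Tb Ti_def by (rule blk_inv(2)[OF Xrc])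
  have goal_eq: "\<And>K H G F. four_block_mat K H G F * (X @\<^sub>r Zmat n N) =
              U @\<^sub>r (Zmat n N * kron (shift_mat N) (1\<^sub>m n)) \<longleftrightarrow> four_block_mat K H G F * T = Y"
    unfolding T_def Y_def Z_def S_def ..
  have uniq: "four_block_mat K H G F = Y * Ti"
    if c: "K \<in> carrier_mat m n" "H \<in> carrier_mat m n'" "G \<in> carrier_mat n' n" "F \<in> carrier_mat n' n'"
      and e: "four_block_mat K H G F * T = Y" for K H G F
  proof -
    have fc: "four_block_mat K H G F \<in> carrier_mat (m+n') (n+n')" using c by auto
    have "four_block_mat K H G F = four_block_mat K H G F * (T * Ti)" using fc TTi by (simp add: right_mult_one_mat)
    also have "\<dots> = (four_block_mat K H G F * T) * Ti" using fc Tc Tic by (simp add: assoc_mult_mat)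
    finally show ?thesis using e by simp
  qed
  obtain K0 H0 G0 F0 where sb: "split_block (Y * Ti) m n = (K0,H0,G0,F0)" by (cases "split_block (Y * Ti) m n") auto
  have YTc: "Y * Ti \<in> carrier_mat (m+n') (n+n')" using Yc Tic by auto
  note spl = split_block[OF sb, of n' n', OF _ _]
  have K0c: "K0 \<in> carrier_mat m n" and H0c: "H0 \<in> carrier_mat m n'" and G0c: "G0 \<in> carrier_mat n' n"
    and F0c: "F0 \<in> carrier_mat n' n'" and YTi: "Y * Ti = four_block_mat K0 H0 G0 F0"
    using spl YTc Yc Tic by auto
  have ex0: "four_block_mat K0 H0 G0 F0 * T = Y"
  proof -
    have "four_block_mat K0 H0 G0 F0 * T = (Y * Ti) * T" using YTi by simp
    also have "\<dots> = Y * (Ti * T)" using Yc Tic Tc by (simp add: assoc_mult_mat)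
    finally show ?thesis using TiT Yc by simp
  qed
  have part1: "\<exists>!(K,H,G,F). K \<in> carrier_mat m n \<and> H \<in> carrier_mat m (n*(N-1)) \<and>
            G \<in> carrier_mat (n*(N-1)) n \<and> F \<in> carrier_mat (n*(N-1)) (n*(N-1)) \<and>
            four_block_mat K H G F * (X @\<^sub>r Zmat n N) =
              U @\<^sub>r (Zmat n N * kron (shift_mat N) (1\<^sub>m n))"
    unfolding goal_eq n'_def[symmetric]
  proof (rule ex1I[of _ "(K0,H0,G0,F0)"])
    show "case (K0,H0,G0,F0) of (K,H,G,F) \<Rightarrow> K \<in> carrier_mat m n \<and> H \<in> carrier_mat m n' \<and>
            G \<in> carrier_mat n' n \<and> F \<in> carrier_mat n' n' \<and> four_block_mat K H G F * T = Y"
      using K0c H0c G0c F0c ex0 by simp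
  next
    fix y assume y: "case y of (K,H,G,F) \<Rightarrow> K \<in> carrier_mat m n \<and> H \<in> carrier_mat m n' \<and>
            G \<in> carrier_mat n' n \<and> F \<in> carrier_mat n' n' \<and> four_block_mat K H G F * T = Y"
    obtain K H G F where yy: "y = (K,H,G,F)" by (cases y) auto
    have c: "K \<in> carrier_mat m n" "H \<in> carrier_mat m n'" "G \<in> carrier_mat n' n" "F \<in> carrier_mat n' n'"
      and e: "four_block_mat K H G F * T = Y" using y yy by auto
    have "four_block_mat K H G F = four_block_mat K0 H0 G0 F0" using uniq[OF c e] YTi by simp
    then have "K = K0 \<and> H = H0 \<and> G = G0 \<and> F = F0"
      by (rule four_block_inj[OF c K0c H0c G0c F0c])
    then show "y = (K0,H0,G0,F0)" using yy by simp
  qed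
  show ?thesis
  proof (rule conjI[OF part1], intro allI impI)
    fix K H G F
    assume Kc: "K \<in> carrier_mat m n" and Hc: "H \<in> carrier_mat m (n*(N-1))"
      and Gc: "G \<in> carrier_mat (n*(N-1)) n" and Fc: "F \<in> carrier_mat (n*(N-1)) (n*(N-1))"
      and eq0: "four_block_mat K H G F * (X @\<^sub>r Zmat n N) = U @\<^sub>r (Zmat n N * kron (shift_mat N) (1\<^sub>m n))"
      and dQ: "det (1\<^sub>m n - (A + B * K)) \<noteq> 0" and dF: "det (1\<^sub>m (n*(N-1)) - F) \<noteq> 0"
    show "invertible_mat (C * minv (1\<^sub>m n - (A + B * K)) * B) \<and>
            (let M = minv (C * minv (1\<^sub>m n - (A + B * K)) * B);
                 L = - (G * minv (1\<^sub>m n - (A + B * K)) * B * M);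
                 Acl = four_block_mat (A + B * K) (B * H) G F;
                 Mr = (B * M) @\<^sub>r L
             in \<forall>r \<in> carrier_vec m.
                  (\<exists>!\<psi>. \<psi> \<in> carrier_vec (n + n*(N-1)) \<and> \<psi> = Acl *\<^sub>v \<psi> + Mr *\<^sub>v r) \<and>
                  (\<forall>\<psi>. \<psi> \<in> carrier_vec (n + n*(N-1)) \<longrightarrow> \<psi> = Acl *\<^sub>v \<psi> + Mr *\<^sub>v r \<longrightarrow>
                        C *\<^sub>v vec_first \<psi> n = r \<and> vec_last \<psi> (n*(N-1)) = 0\<^sub>v (n*(N-1))))"
    proof -
    have Hc': "H \<in> carrier_mat m n'" and Gc': "G \<in> carrier_mat n' n" and Fc': "F \<in> carrier_mat n' n'"
      using Hc Gc Fc unfolding n'_def by auto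
    have eq: "four_block_mat K H G F * T = Y" using eq0 goal_eq by simp
    have Z0: "0\<^sub>m n 0 \<in> carrier_mat n 0" "0\<^sub>m n' 0 \<in> carrier_mat n' 0" "0\<^sub>m m 0 \<in> carrier_mat m 0" by auto
    have Tb2: "T = four_block_mat X (0\<^sub>m n 0) Z (0\<^sub>m n' 0)"
      unfolding T_def append_rows_def using X Zc by auto
    have Yb2: "Y = four_block_mat U (0\<^sub>m m 0) (Z * S) (0\<^sub>m n' 0)"
      unfolding Y_def append_rows_def using Uc Zc Sc by auto
    have "four_block_mat K H G F * T = four_block_mat (K * X + H * Z) (K * 0\<^sub>m n 0 + H * 0\<^sub>m n' 0)
          (G * X + F * Z) (G * 0\<^sub>m n 0 + F * 0\<^sub>m n' 0)"
      unfolding Tb2 by (rule mult_four_block_mat[OF Kc Hc' Gc' Fc' X Z0(1) Zc Z0(2)])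
    then have blk: "four_block_mat (K * X + H * Z) (K * 0\<^sub>m n 0 + H * 0\<^sub>m n' 0)
          (G * X + F * Z) (G * 0\<^sub>m n 0 + F * 0\<^sub>m n' 0) = four_block_mat U (0\<^sub>m m 0) (Z * S) (0\<^sub>m n' 0)"
      using eq Yb2 by simp
    have "K * X + H * Z = U \<and> K * 0\<^sub>m n 0 + H * 0\<^sub>m n' 0 = 0\<^sub>m m 0 \<and> G * X + F * Z = Z * S \<and> G * 0\<^sub>m n 0 + F * 0\<^sub>m n' 0 = 0\<^sub>m n' 0"
    proof (rule four_block_inj[OF _ _ _ _ _ _ _ _ blk])
      show "K * X + H * Z \<in> carrier_mat m (n+n')" "K * 0\<^sub>m n 0 + H * 0\<^sub>m n' 0 \<in> carrier_mat m 0"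
        "G * X + F * Z \<in> carrier_mat n' (n+n')" "G * 0\<^sub>m n 0 + F * 0\<^sub>m n' 0 \<in> carrier_mat n' 0"
        "U \<in> carrier_mat m (n+n')" "0\<^sub>m m 0 \<in> carrier_mat m 0" "Z * S \<in> carrier_mat n' (n+n')"
        "0\<^sub>m n' 0 \<in> carrier_mat n' 0"
        using Kc Hc' Gc' Fc' X Zc Uc Sc by auto
    qed
    then have KU: "K * X + H * Z = U" and GV: "G * X + F * Z = Z * S" by auto
    define Acl where "Acl = four_block_mat (A + B * K) (B * H) G F"
    have Acl_c: "Acl \<in> carrier_mat (n+n') (n+n')" unfolding Acl_def using A B Kc Hc' Gc' Fc' by auto
    have top: "(A + B * K) * X + (B * H) * Z = X * S"
    proof -
      have "(A + B * K) * X + (B * H) * Z = A * X + (B * (K * X) + B * (H * Z))"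
        using A B Kc Hc' X Zc by (simp add: add_mult_distrib_mat assoc_mult_mat[of _ n m] assoc_add_mat[of _ n "n+n'"])
      also have "\<dots> = A * X + B * U"
      proof -
        have "B * (K * X) + B * (H * Z) = B * (K * X + H * Z)"
          by (rule mult_add_distrib_mat[symmetric], insert B Kc Hc' X Zc, auto)
        then show ?thesis using KU by simp
      qed
      finally show ?thesis using dyn S_def by simp
    qed
    have AclT: "Acl * T = T * S"
    proof -
      have "Acl * T = four_block_mat ((A + B * K) * X + (B * H) * Z) ((A + B * K) * 0\<^sub>m n 0 + (B * H) * 0\<^sub>m n' 0)
          (G * X + F * Z) (G * 0\<^sub>m n 0 + F * 0\<^sub>m n' 0)"
        unfolding Tb2 Acl_def
        by (rule mult_four_block_mat, insert A B Kc Hc' Gc' Fc' X Zc, auto)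
      also have "\<dots> = four_block_mat (X * S) (0\<^sub>m n 0) (Z * S) (0\<^sub>m n' 0)"
        unfolding top GV using A B Kc Hc' Gc' Fc' by (intro cong_four_block_mat) (auto intro!: eq_matI)
      also have "\<dots> = (X * S) @\<^sub>r (Z * S)" unfolding append_rows_def using X Zc Sc by simp
      also have "\<dots> = T * S" unfolding T_def by (rule append_rows_mult[OF X Zc Sc, symmetric])
      finally show ?thesis .
    qed
    have fixz: "d = 0\<^sub>v (n+n')" if d: "d \<in> carrier_vec (n+n')" and fd: "Acl *\<^sub>v d = d" for d
    proof -
      define e where "e = Ti *\<^sub>v d"
      have ec: "e \<in> carrier_vec (n+n')" unfolding e_def using Tic d by auto
      have Te: "T *\<^sub>v e = d"
      proof -
        have "T *\<^sub>v e = (T * Ti) *\<^sub>v d" unfolding e_def by (rule assoc_mult_mat_vec[symmetric, OF Tc Tic d])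
        then show ?thesis using TTi d by simp
      qed
      have SeC: "S *\<^sub>v e \<in> carrier_vec (n+n')" using Sc ec by auto
      have TSe: "T *\<^sub>v (S *\<^sub>v e) = d"
      proof -
        have "T *\<^sub>v (S *\<^sub>v e) = (T * S) *\<^sub>v e" by (rule assoc_mult_mat_vec[symmetric, OF Tc Sc ec])
        also have "\<dots> = (Acl * T) *\<^sub>v e" unfolding AclT ..
        also have "\<dots> = Acl *\<^sub>v (T *\<^sub>v e)" by (rule assoc_mult_mat_vec[OF Acl_c Tc ec])
        finally show ?thesis using Te fd by simp
      qed
      have "S *\<^sub>v e = (Ti * T) *\<^sub>v (S *\<^sub>v e)" using TiT SeC by simp
      also have "\<dots> = Ti *\<^sub>v (T *\<^sub>v (S *\<^sub>v e))" by (rule assoc_mult_mat_vec[OF Tic Tc SeC])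
      also have "\<dots> = Ti *\<^sub>v d" by (simp only: TSe)
      also have "\<dots> = e" unfolding e_def ..
      finally have "S *\<^sub>v e = e" .
      then have "e = 0\<^sub>v (n*N)" using shift_fix[of e n N] ec nN' unfolding S_def by simp
      then have "e = 0\<^sub>v (n+n')" using nN' by simp
      then show ?thesis using Te Tc by (simp add: mult_zero_vec_r)
    qed
    define Q where "Q = 1\<^sub>m n - (A + B * K)"
    have Qc: "Q \<in> carrier_mat n n" unfolding Q_def using A B Kc by auto
    define Qi where "Qi = minv Q"
    have dQ': "det Q \<noteq> 0" using dQ unfolding Q_def .
    have Qic: "Qi \<in> carrier_mat n n" and QQi: "Q * Qi = 1\<^sub>m n" and QiQ: "Qi * Q = 1\<^sub>m n"
      using minv_props[OF Qc dQ'] unfolding Qi_def by auto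
    have BKc: "B * K \<in> carrier_mat n n" using B Kc by auto
    have Qexp: "Q *\<^sub>v x = x - (A *\<^sub>v x + B *\<^sub>v (K *\<^sub>v x))" if xc: "x \<in> carrier_vec n" for x
    proof -
      have "Q *\<^sub>v x = 1\<^sub>m n *\<^sub>v x - (A + B * K) *\<^sub>v x" unfolding Q_def
        by (rule minus_mult_distrib_mat_vec[OF one_carrier_mat _ xc], insert A BKc, auto)
      also have "(A + B * K) *\<^sub>v x = A *\<^sub>v x + (B * K) *\<^sub>v x"
        by (rule add_mult_distrib_mat_vec[OF A BKc xc])
      also have "(B * K) *\<^sub>v x = B *\<^sub>v (K *\<^sub>v x)" by (rule assoc_mult_mat_vec[OF B Kc xc])
      finally show ?thesis using xc by simp
    qed
    have QQix: "Q *\<^sub>v (Qi *\<^sub>v y) = y" if yc: "y \<in> carrier_vec n" for y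
    proof -
      have "Q *\<^sub>v (Qi *\<^sub>v y) = (Q * Qi) *\<^sub>v y" by (rule assoc_mult_mat_vec[symmetric, OF Qc Qic yc])
      then show ?thesis using QQi yc by simp
    qed
    define Pm where "Pm = C * Qi * B"
    have Pmc: "Pm \<in> carrier_mat m m" unfolding Pm_def using C Qic B by auto
    have Pmv: "Pm *\<^sub>v w = C *\<^sub>v (Qi *\<^sub>v (B *\<^sub>v w))" if wc: "w \<in> carrier_vec m" for w
    proof -
      have "Pm *\<^sub>v w = (C * Qi) *\<^sub>v (B *\<^sub>v w)" unfolding Pm_def
        by (rule assoc_mult_mat_vec[of _ m n], insert C Qic B wc, auto)
      also have "\<dots> = C *\<^sub>v (Qi *\<^sub>v (B *\<^sub>v w))"
        by (rule assoc_mult_mat_vec[of _ m n], insert C Qic B wc, auto)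
      finally show ?thesis .
    qed
    define Mb where "Mb = four_block_mat (1\<^sub>m n - A) B C (0\<^sub>m m m)"
    have Mbc: "Mb \<in> carrier_mat (n+m) (n+m)" unfolding Mb_def using A B C by auto
    have dMb: "det Mb \<noteq> 0" using vec_space.det_rank_iff[OF Mbc] rank unfolding Mb_def by simp
    have inj: "w = 0\<^sub>v m" if wc: "w \<in> carrier_vec m" and Pw: "Pm *\<^sub>v w = 0\<^sub>v m" for w
    proof -
      define x where "x = Qi *\<^sub>v (B *\<^sub>v w)"
      have xc: "x \<in> carrier_vec n" unfolding x_def using Qic B wc by auto
      have Bwc: "B *\<^sub>v w \<in> carrier_vec n" using B wc by auto
      have Qx: "x - (A *\<^sub>v x + B *\<^sub>v (K *\<^sub>v x)) = B *\<^sub>v w"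
        using Qexp[OF xc] QQix[OF Bwc] unfolding x_def by simp
      have Cx: "C *\<^sub>v x = 0\<^sub>v m" using Pw Pmv[OF wc] unfolding x_def by simp
      define v where "v = (- K) *\<^sub>v x - w"
      have vc: "v \<in> carrier_vec m" unfolding v_def using Kc xc wc by auto
      have Kxc: "K *\<^sub>v x \<in> carrier_vec m" using Kc xc by auto
      have Bv: "B *\<^sub>v v = - (B *\<^sub>v (K *\<^sub>v x)) - B *\<^sub>v w"
      proof -
        have "B *\<^sub>v v = B *\<^sub>v ((- K) *\<^sub>v x) - B *\<^sub>v w" unfolding v_def
          by (rule mult_minus_distrib_mat_vec[OF B _ wc], insert Kc xc, auto)
        also have "(- K) *\<^sub>v x = - (K *\<^sub>v x)" using Kc xc by simp
        also have "B *\<^sub>v (- (K *\<^sub>v x)) = - (B *\<^sub>v (K *\<^sub>v x))" by (rule mult_uminus_vec_r[OF B Kxc])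
        finally show ?thesis .
      qed
      have IA: "(1\<^sub>m n - A) *\<^sub>v x = x - A *\<^sub>v x"
        using minus_mult_distrib_mat_vec[OF one_carrier_mat A xc] xc by simp
      have top0: "(1\<^sub>m n - A) *\<^sub>v x + B *\<^sub>v v = 0\<^sub>v n" unfolding IA Bv
        by (rule vhelp1[OF xc _ _ _ Qx], insert A B Kxc wc xc, auto)
      have "Mb *\<^sub>v (x @\<^sub>v v) = ((1\<^sub>m n - A) *\<^sub>v x + B *\<^sub>v v) @\<^sub>v (C *\<^sub>v x + 0\<^sub>m m m *\<^sub>v v)"
        unfolding Mb_def by (rule four_block_mat_mult_vec, insert A B C xc vc, auto)
      also have "\<dots> = 0\<^sub>v (n+m)" unfolding top0 Cx zero_mat_mult_vec[OF vc]
        by (intro eq_vecI) auto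
      finally have M0: "Mb *\<^sub>v (x @\<^sub>v v) = 0\<^sub>v (n+m)" .
      have xvc: "x @\<^sub>v v \<in> carrier_vec (n+m)" using xc vc by auto
      have z: "x @\<^sub>v v = 0\<^sub>v (n+m)" using det_0_iff_vec_prod_zero_field[OF Mbc] dMb M0 xvc by auto
      have x0: "x = 0\<^sub>v n"
      proof (rule vec_eqI_n[OF xc])
        fix i assume i: "i < n"
        have "(x @\<^sub>v v) $ i = 0\<^sub>v (n+m) $ i" using z by simp
        then show "x $ i = 0\<^sub>v n $ i" using i xc vc by simp
      qed auto
      have v0: "v = 0\<^sub>v m"
      proof (rule vec_eqI_n[OF vc])
        fix i assume i: "i < m"
        have "(x @\<^sub>v v) $ (n+i) = 0\<^sub>v (n+m) $ (n+i)" using z by simp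
        then show "v $ i = 0\<^sub>v m $ i" using i xc vc by simp
      qed auto
      have "(- K) *\<^sub>v x = 0\<^sub>v m" unfolding x0 by (rule mult_zero_vec_r, insert Kc, auto)
      then show ?thesis using v0 wc unfolding v_def
        by (intro vhelp2[OF wc]) auto
    qed
    have dPm: "det Pm \<noteq> 0" using det_0_iff_vec_prod_zero_field[OF Pmc] inj by auto
    define M where "M = minv Pm"
    have Mc: "M \<in> carrier_mat m m" and PmM: "Pm * M = 1\<^sub>m m" and MPm: "M * Pm = 1\<^sub>m m"
      using minv_props[OF Pmc dPm] unfolding M_def by auto
    have invP: "invertible_mat Pm" by (rule inv_invertible[OF Pmc Mc PmM MPm])
    define L where "L = - (G * Qi * B * M)"
    define Mr where "Mr = (B * M) @\<^sub>r L"
    have stst: "(\<exists>!\<psi>. \<psi> \<in> carrier_vec (n + n') \<and> \<psi> = Acl *\<^sub>v \<psi> + Mr *\<^sub>v r) \<and>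
                  (\<forall>\<psi>. \<psi> \<in> carrier_vec (n + n') \<longrightarrow> \<psi> = Acl *\<^sub>v \<psi> + Mr *\<^sub>v r \<longrightarrow>
                        C *\<^sub>v vec_first \<psi> n = r \<and> vec_last \<psi> n' = 0\<^sub>v n')"
      if rc: "r \<in> carrier_vec m" for r
    proof -
      define y0 where "y0 = B *\<^sub>v (M *\<^sub>v r)"
      have y0c: "y0 \<in> carrier_vec n" unfolding y0_def using B Mc rc by auto
      define x0 where "x0 = Qi *\<^sub>v y0"
      have x0c: "x0 \<in> carrier_vec n" unfolding x0_def using Qic y0c by auto
      have Qx0: "x0 - (A *\<^sub>v x0 + B *\<^sub>v (K *\<^sub>v x0)) = y0"
        using Qexp[OF x0c] QQix[OF y0c] unfolding x0_def by simp
      define p0 where "p0 = x0 @\<^sub>v 0\<^sub>v n'"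
      have p0c: "p0 \<in> carrier_vec (n+n')" unfolding p0_def using x0c by auto
      have Mrr: "Mr *\<^sub>v r = y0 @\<^sub>v (- (G *\<^sub>v x0))"
      proof -
        have BMc: "B * M \<in> carrier_mat n m" using B Mc by auto
        have Lc: "L \<in> carrier_mat n' m" unfolding L_def using Gc' Qic B Mc by auto
        have "Mr *\<^sub>v r = ((B * M) *\<^sub>v r) @\<^sub>v (L *\<^sub>v r)" unfolding Mr_def by (rule mat_mult_append[OF BMc Lc rc])
        also have "(B * M) *\<^sub>v r = y0" unfolding y0_def by (rule assoc_mult_mat_vec[OF B Mc rc])
        also have "L *\<^sub>v r = - (G *\<^sub>v x0)"
        proof -
          have "L *\<^sub>v r = - ((G * Qi * B * M) *\<^sub>v r)" unfolding L_def
            by (rule uminus_mult_mat_vec, insert rc Mc, auto)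
          also have "(G * Qi * B * M) *\<^sub>v r = (G * Qi * B) *\<^sub>v (M *\<^sub>v r)"
            by (rule assoc_mult_mat_vec[of _ n' m], insert Gc' Qic B Mc rc, auto)
          also have "\<dots> = (G * Qi) *\<^sub>v y0" unfolding y0_def
            by (rule assoc_mult_mat_vec[of _ n' n], insert Gc' Qic B Mc rc, auto)
          also have "\<dots> = G *\<^sub>v x0" unfolding x0_def
            by (rule assoc_mult_mat_vec[of _ n' n], insert Gc' Qic y0c, auto)
          finally show ?thesis .
        qed
        finally show ?thesis .
      qed
      have Aclp0: "Acl *\<^sub>v p0 = ((A + B * K) *\<^sub>v x0 + (B * H) *\<^sub>v 0\<^sub>v n') @\<^sub>v (G *\<^sub>v x0 + F *\<^sub>v 0\<^sub>v n')"
        unfolding Acl_def p0_def by (rule four_block_mat_mult_vec, insert A B Kc Hc' Gc' Fc' x0c, auto)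
      have e1: "(A + B * K) *\<^sub>v x0 = A *\<^sub>v x0 + B *\<^sub>v (K *\<^sub>v x0)"
        using add_mult_distrib_mat_vec[OF A BKc x0c] assoc_mult_mat_vec[OF B Kc x0c] by simp
      have e2: "(B * H) *\<^sub>v 0\<^sub>v n' = 0\<^sub>v n" by (rule mult_zero_vec_r, insert B Hc', auto)
      have e3: "F *\<^sub>v 0\<^sub>v n' = 0\<^sub>v n'" by (rule mult_zero_vec_r[OF Fc'])
      have sol: "p0 = Acl *\<^sub>v p0 + Mr *\<^sub>v r"
      proof -
        have "Acl *\<^sub>v p0 + Mr *\<^sub>v r = ((A *\<^sub>v x0 + B *\<^sub>v (K *\<^sub>v x0) + 0\<^sub>v n) + y0) @\<^sub>v ((G *\<^sub>v x0 + 0\<^sub>v n') + - (G *\<^sub>v x0))"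
          unfolding Aclp0 Mrr e1 e2 e3
          by (rule append_vec_add[where m="n'"], insert A B Kc x0c y0c Gc', auto)
        also have "\<dots> = x0 @\<^sub>v 0\<^sub>v n'"
        proof -
          have "(A *\<^sub>v x0 + B *\<^sub>v (K *\<^sub>v x0) + 0\<^sub>v n) + y0 = x0"
            by (rule vhelp3[OF x0c _ _ y0c Qx0], insert A B Kc x0c, auto)
          moreover have "(G *\<^sub>v x0 + 0\<^sub>v n') + - (G *\<^sub>v x0) = 0\<^sub>v n'"
            by (rule vhelp4, insert Gc' x0c, auto)
          ultimately show ?thesis by simp
        qed
        finally show ?thesis unfolding p0_def by simp
      qed
      have uniq: "\<psi> = p0" if pc: "\<psi> \<in> carrier_vec (n+n')" and ps: "\<psi> = Acl *\<^sub>v \<psi> + Mr *\<^sub>v r" for \<psi>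
      proof -
        have "Acl *\<^sub>v (\<psi> - p0) = Acl *\<^sub>v \<psi> - Acl *\<^sub>v p0" by (rule mult_minus_distrib_mat_vec[OF Acl_c pc p0c])
        also have "\<dots> = \<psi> - p0" by (rule vhelp5[where c="Mr *\<^sub>v r" and n="n+n'"], insert Acl_c pc p0c ps sol Mrr y0c Gc' x0c, auto)
        finally have "\<psi> - p0 = 0\<^sub>v (n+n')" using fixz[of "\<psi> - p0"] pc p0c by auto
        then show ?thesis by (rule vhelp6[OF pc p0c])
      qed
      have vf: "vec_first p0 n = x0" unfolding p0_def vec_first_def using x0c by (intro eq_vecI) auto
      have vl: "vec_last p0 n' = 0\<^sub>v n'" unfolding p0_def vec_last_def using x0c by (intro eq_vecI) auto
      have Cx0: "C *\<^sub>v x0 = r"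
      proof -
        have "C *\<^sub>v x0 = Pm *\<^sub>v (M *\<^sub>v r)" unfolding x0_def y0_def using Pmv[of "M *\<^sub>v r"] Mc rc by auto
        also have "\<dots> = (Pm * M) *\<^sub>v r" by (rule assoc_mult_mat_vec[symmetric, OF Pmc Mc rc])
        finally show ?thesis using PmM rc by simp
      qed
      show ?thesis
        using sol uniq p0c vf vl Cx0 by blast
    qed
    show ?thesis
      unfolding Let_def n'_def[symmetric]
      using invP stst unfolding Pm_def M_def L_def Mr_def Acl_def Qi_def Q_def by blast
    qed
  qed
qed

end
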